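(* Let $\mathcal K$ be a compact subset of $\mathcal L_{\mathbb C}$. Then for all $x\in\mathbf S^3$ and $w\in\mathcal K$, \[d_E(x,w^\perp)=\frac{|\langle x,w\rangle|}{\|x\|\,\|w\|},\] and there is a constant $C\ge1$ (depending only on $\mathcal K$) such that for all $x\in\mathbf S^3$, $w\in\mathcal K$, \[C^{-1}d_E(x,w^\perp)\le d_E(x,L_w)\le C\,d_E(x,w^\perp),\qquad C^{-1}d_E(x,L_w)\le d(x,L_w)\le C\,d_E(x,L_w).\]
   Context: On $\mathbb{C}^3$: $u\cdot v=\sum u_i\bar v_i$, $\|u\|=\sqrt{u\cdot u}$, $\langle u,v\rangle=u_0\bar v_0-u_1\bar v_1-u_2\bar v_2$, $q(u)=\langle u,u\rangle$, $\|u\wedge v\|^2=\|u\|^2\|v\|^2-|u\cdot v|^2$. On $\mathbb P^2_{\mathbb C}$, $d_E(u,v)=\|u\wedge v\|/(\|u\|\|v\|)$. $\mathbf S^3=\{u:q(u)=0\}$ with visual metric $d(u,v)=\sqrt{|\langle u,v\rangle|/(\|u\|\|v\|)}$. $\mathcal L_{\mathbb C}=\{w\in\mathbb P^2_{\mathbb C}:q(w)<0\}$ with metric $d_E$; $w^\perp=\{u\in\mathbb P^2_{\mathbb C}:\langle u,w\rangle=0\}$ and $L_w=w^\perp\cap\mathbf S^3$ is the associated chain. Distances to sets are infima over points of the set: $d_E(x,w^\perp)$ in $\mathbb P^2_{\mathbb C}$, $d_E(x,L_w)$ and $d(x,L_w)$ over $L_w$. *)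

theory Defs
  imports "HOL-Analysis.Analysis"
begin

text \<open>Vectors of C^3 are triples; points of P^2_C are represented by nonzero vectors
  (all quantities below are invariant under nonzero scaling).\<close>

type_synonym cvec = "complex \<times> complex \<times> complex"

definition c0 :: "cvec \<Rightarrow> complex" where "c0 u = fst u"
definition c1 :: "cvec \<Rightarrow> complex" where "c1 u = fst (snd u)"
definition c2 :: "cvec \<Rightarrow> complex" where "c2 u = snd (snd u)"

definition hdot :: "cvec \<Rightarrow> cvec \<Rightarrow> complex" where
  "hdot u v = c0 u * cnj (c0 v) + c1 u * cnj (c1 v) + c2 u * cnj (c2 v)"

definition vnorm :: "cvec \<Rightarrow> real" where
  "vnorm u = sqrt (Re (hdot u u))"

definition herm :: "cvec \<Rightarrow> cvec \<Rightarrow> complex" where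
  "herm u v = c0 u * cnj (c0 v) - c1 u * cnj (c1 v) - c2 u * cnj (c2 v)"

definition qf :: "cvec \<Rightarrow> real" where
  "qf u = Re (herm u u)"

definition wedge_norm :: "cvec \<Rightarrow> cvec \<Rightarrow> real" where
  "wedge_norm u v = sqrt ((vnorm u)\<^sup>2 * (vnorm v)\<^sup>2 - (cmod (hdot u v))\<^sup>2)"

definition dE :: "cvec \<Rightarrow> cvec \<Rightarrow> real" where
  "dE u v = wedge_norm u v / (vnorm u * vnorm v)"

definition P2 :: "cvec set" where "P2 = {u. u \<noteq> 0}"

definition S3 :: "cvec set" where "S3 = {u. u \<noteq> 0 \<and> qf u = 0}"

definition dvis :: "cvec \<Rightarrow> cvec \<Rightarrow> real" where
  "dvis u v = sqrt (cmod (herm u v) / (vnorm u * vnorm v))"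

definition LC :: "cvec set" where "LC = {w. w \<noteq> 0 \<and> qf w < 0}"

definition perp :: "cvec \<Rightarrow> cvec set" where
  "perp w = {u. u \<noteq> 0 \<and> herm u w = 0}"

definition chain :: "cvec \<Rightarrow> cvec set" where
  "chain w = perp w \<inter> S3"

definition setdist_with :: "(cvec \<Rightarrow> cvec \<Rightarrow> real) \<Rightarrow> cvec \<Rightarrow> cvec set \<Rightarrow> real" where
  "setdist_with d x A = (INF u\<in>A. d x u)"

text \<open>Compactness of a subset of P^2_C with respect to the metric d_E
  (sequential compactness, equivalent to compactness for metric spaces).\<close>
definition dE_compact :: "cvec set \<Rightarrow> bool" where
  "dE_compact K \<longleftrightarrow> K \<subseteq> P2 \<and>
     (\<forall>s::nat \<Rightarrow> cvec. (\<forall>n. s n \<in> K) \<longrightarrow>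
        (\<exists>r l. strict_mono r \<and> l \<in> K \<and> (\<lambda>n. dE (s (r n)) l) \<longlonglongrightarrow> 0))"

end

theory Submission
  imports Defs
begin

lemma cvec_cases: obtains a b c where "(x::cvec) = (a,b,c)" by (metis prod_cases3)

lemma comps[simp]: "c0 (a,b,c) = a" "c1 (a,b,c) = b" "c2 (a,b,c) = c"
  by (simp_all add: c0_def c1_def c2_def)

lemma mc: "z * cnj z = (complex_of_real (cmod z))^2"
  by (metis complex_norm_square of_real_power)
lemma mc2: "cnj z * z = (complex_of_real (cmod z))^2"
  by (metis mc mult.commute)

definition sm :: "complex \<Rightarrow> cvec \<Rightarrow> cvec" where
  "sm k u = (k * c0 u, k * c1 u, k * c2 u)"

definition Jv :: "cvec \<Rightarrow> cvec" where
  "Jv u = (c0 u, - c1 u, - c2 u)"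

definition det3 :: "cvec \<Rightarrow> cvec \<Rightarrow> cvec \<Rightarrow> complex" where
 "det3 x u v = c0 x * (c1 u * c2 v - c2 u * c1 v) - c1 x * (c0 u * c2 v - c2 u * c0 v) + c2 x * (c0 u * c1 v - c1 u * c0 v)"

definition crs :: "cvec \<Rightarrow> cvec \<Rightarrow> cvec" where
 "crs w x = (cnj (c1 w * c2 x - c2 w * c1 x), - cnj (c2 w * c0 x - c0 w * c2 x), - cnj (c0 w * c1 x - c1 w * c0 x))"

lemma hdot_self: "hdot u u = complex_of_real ((norm u)^2)"
proof -
  obtain a b c where u: "u = (a,b,c)" by (rule cvec_cases)
  show ?thesis unfolding u hdot_def by (simp add: norm_Pair mc)
qed

lemma vnorm_eq: "vnorm u = norm u"
  unfolding vnorm_def hdot_self by simp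

lemma herm_self: "herm u u = complex_of_real (qf u)"
proof -
  obtain a b c where u: "u = (a,b,c)" by (rule cvec_cases)
  show ?thesis unfolding u herm_def qf_def by (simp add: mc)
qed

lemma qf_expr: "qf u = (cmod (c0 u))^2 - (cmod (c1 u))^2 - (cmod (c2 u))^2"
proof -
  obtain a b c where u: "u = (a,b,c)" by (rule cvec_cases)
  show ?thesis unfolding u herm_def qf_def by (simp add: mc)
qed

lemma norm_expr: "(norm u)^2 = (cmod (c0 u))^2 + (cmod (c1 u))^2 + (cmod (c2 u))^2"
proof -
  obtain a b c where u: "u = (a,b,c)" by (rule cvec_cases)
  show ?thesis unfolding u by (simp add: norm_Pair)
qed

lemma c0_le_norm: "cmod (c0 u) \<le> norm u"
proof -
  have "(cmod (c0 u))^2 \<le> (norm u)^2" unfolding norm_expr by simp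
  then show ?thesis using power2_le_imp_le by fastforce
qed

lemma herm_swap: "herm b a = cnj (herm a b)"
  unfolding herm_def by (simp add: mult.commute)
lemma hdot_swap: "hdot b a = cnj (hdot a b)"
  unfolding hdot_def by (simp add: mult.commute)

lemma herm_add1: "herm (a + b) c = herm a c + herm b c"
proof -
  obtain a1 a2 a3 where a: "a = (a1,a2,a3)" by (rule cvec_cases)
  obtain b1 b2 b3 where b: "b = (b1,b2,b3)" by (rule cvec_cases)
  show ?thesis unfolding a b herm_def by (simp add: algebra_simps)
qed
lemma herm_diff1: "herm (a - b) c = herm a c - herm b c"
proof -
  obtain a1 a2 a3 where a: "a = (a1,a2,a3)" by (rule cvec_cases)
  obtain b1 b2 b3 where b: "b = (b1,b2,b3)" by (rule cvec_cases)
  show ?thesis unfolding a b herm_def by (simp add: algebra_simps)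
qed
lemma herm_sm1: "herm (sm k a) c = k * herm a c"
  unfolding herm_def sm_def by (simp add: algebra_simps)
lemma herm_add2: "herm c (a + b) = herm c a + herm c b"
  by (metis herm_swap herm_add1 complex_cnj_add)
lemma herm_diff2: "herm c (a - b) = herm c a - herm c b"
  by (metis herm_swap herm_diff1 complex_cnj_diff)
lemma herm_sm2: "herm c (sm k a) = cnj k * herm c a"
  by (metis herm_swap herm_sm1 complex_cnj_mult)

lemma hdot_add1: "hdot (a + b) c = hdot a c + hdot b c"
proof -
  obtain a1 a2 a3 where a: "a = (a1,a2,a3)" by (rule cvec_cases)
  obtain b1 b2 b3 where b: "b = (b1,b2,b3)" by (rule cvec_cases)
  show ?thesis unfolding a b hdot_def by (simp add: algebra_simps)
qed
lemma hdot_diff1: "hdot (a - b) c = hdot a c - hdot b c"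
proof -
  obtain a1 a2 a3 where a: "a = (a1,a2,a3)" by (rule cvec_cases)
  obtain b1 b2 b3 where b: "b = (b1,b2,b3)" by (rule cvec_cases)
  show ?thesis unfolding a b hdot_def by (simp add: algebra_simps)
qed
lemma hdot_sm1: "hdot (sm k a) c = k * hdot a c"
  unfolding hdot_def sm_def by (simp add: algebra_simps)
lemma hdot_add2: "hdot c (a + b) = hdot c a + hdot c b"
  by (metis hdot_swap hdot_add1 complex_cnj_add)
lemma hdot_diff2: "hdot c (a - b) = hdot c a - hdot c b"
  by (metis hdot_swap hdot_diff1 complex_cnj_diff)
lemma hdot_sm2: "hdot c (sm k a) = cnj k * hdot c a"
  by (metis hdot_swap hdot_sm1 complex_cnj_mult)

lemmas lin = herm_add1 herm_diff1 herm_sm1 herm_add2 herm_diff2 herm_sm2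
  hdot_add1 hdot_diff1 hdot_sm1 hdot_add2 hdot_diff2 hdot_sm2

lemma herm_J: "herm a w = hdot a (Jv w)"
  unfolding herm_def hdot_def Jv_def by simp
lemma norm_J: "norm (Jv w) = norm w"
proof -
  obtain a b c where u: "w = (a,b,c)" by (rule cvec_cases)
  show ?thesis unfolding u Jv_def by (simp add: norm_Pair)
qed

lemma zero_cvec: "(0::cvec) = (0,0,0)" by (simp add: zero_prod_def)
lemma sm_zero[simp]: "sm 0 u = 0"
  unfolding sm_def zero_cvec by simp
lemma sm_one: "x - sm k v = 0 \<Longrightarrow> x = sm k v"
  by simp

lemma norm_sm: "norm (sm k u) = cmod k * norm u"
proof -
  have "(norm (sm k u))^2 = (cmod k * norm u)^2"
    unfolding norm_expr[of "sm k u"] power_mult_distrib norm_expr[of u] by (simp add: sm_def norm_mult power_mult_distrib distrib_left)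
  then show ?thesis by (simp add: power2_eq_iff_nonneg)
qed

lemma gram: "hdot v v * (hdot x x * hdot u u - hdot x u * cnj (hdot x u)) - hdot u u * (hdot x v * cnj (hdot x v))
  - hdot x x * (hdot u v * cnj (hdot u v)) + (hdot x u * hdot u v * hdot v x + cnj (hdot x u * hdot u v * hdot v x)) = det3 x u v * cnj (det3 x u v)"
proof -
  obtain a b c where x: "x = (a,b,c)" by (rule cvec_cases)
  obtain d e f where u: "u = (d,e,f)" by (rule cvec_cases)
  obtain g h i where v: "v = (g,h,i)" by (rule cvec_cases)
  show ?thesis unfolding x u v hdot_def det3_def
    by simp algebra
qed

lemma re_hdot: "Re (hdot a b) = inner a b"
proof -
  obtain a1 a2 a3 where a: "a = (a1,a2,a3)" by (rule cvec_cases)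
  obtain b1 b2 b3 where b: "b = (b1,b2,b3)" by (rule cvec_cases)
  show ?thesis unfolding a b hdot_def by (simp add: inner_complex_def)
qed

lemma cs: "cmod (hdot x u) \<le> norm x * norm u"
proof (cases "hdot x u = 0")
  case True then show ?thesis by simp
next
  case False
  define z where "z = hdot x u"
  define k where "k = cnj z / complex_of_real (cmod z)"
  have "hdot (sm k x) u = complex_of_real (cmod z)"
    unfolding hdot_sm1 k_def z_def[symmetric] using False z_def
    by (simp add: field_simps mc2 mc power2_eq_square)
  then have "cmod z = inner (sm k x) u" unfolding re_hdot[symmetric] by simp
  also have "\<dots> \<le> norm (sm k x) * norm u" by (rule norm_cauchy_schwarz)
  also have "norm (sm k x) = norm x" unfolding norm_sm k_def using False z_def
    by (simp add: norm_divide)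
  finally show ?thesis unfolding z_def .
qed

lemma cs_herm: "cmod (herm x u) \<le> norm x * norm u"
  using cs[of x "Jv u"] by (simp add: herm_J norm_J)

lemma crs_perp1: "herm (crs w x) w = 0"
proof -
  obtain a b c where x: "w = (a,b,c)" by (rule cvec_cases)
  obtain d e f where u: "x = (d,e,f)" by (rule cvec_cases)
  show ?thesis unfolding x u herm_def crs_def by simp algebra
qed
lemma crs_perp2: "herm (crs w x) x = 0"
proof -
  obtain a b c where x: "w = (a,b,c)" by (rule cvec_cases)
  obtain d e f where u: "x = (d,e,f)" by (rule cvec_cases)
  show ?thesis unfolding x u herm_def crs_def by simp algebra
qed

lemma crsq: "herm (crs w x) (crs w x) = herm w w * herm x x - herm w x * herm x w"
proof -
  obtain a b c where x: "w = (a,b,c)" by (rule cvec_cases)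
  obtain d e f where u: "x = (d,e,f)" by (rule cvec_cases)
  show ?thesis unfolding x u herm_def crs_def
    by simp algebra
qed

lemma null_id: "hdot x u = 2 * (c0 x * cnj (c0 u)) - herm x u"
  unfolding hdot_def herm_def by simp

lemma herm_zero[simp]: "herm 0 u = 0" "herm u 0 = 0" unfolding herm_def by (simp_all add: c0_def c1_def c2_def)

lemma herm_JJ: "herm (Jv w) (Jv w) = herm w w"
  unfolding herm_def Jv_def by simp

lemma qf_zero[simp]: "qf 0 = 0" unfolding qf_def by simp

lemma sd_lower: assumes "\<And>u. u \<in> A \<Longrightarrow> 0 \<le> d x u" "u \<in> A" shows "setdist_with d x A \<le> d x u"
  unfolding setdist_with_def by (rule cINF_lower) (auto intro: bdd_belowI2 assms)

lemma sd_greatest: "A \<noteq> {} \<Longrightarrow> (\<And>u. u \<in> A \<Longrightarrow> m \<le> d x u) \<Longrightarrow> m \<le> setdist_with d x A"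
  unfolding setdist_with_def by (rule cINF_greatest)

lemma dE_expr: "dE x u = sqrt ((norm x)^2*(norm u)^2 - (cmod (hdot x u))^2)/(norm x * norm u)"
  unfolding dE_def wedge_norm_def vnorm_eq by simp

lemma dE_nonneg: "0 \<le> dE x u"
proof -
  have "(cmod (hdot x u))^2 \<le> (norm x * norm u)^2" using cs[of x u] by (simp add: power_mono)
  then have "0 \<le> (norm x)^2*(norm u)^2 - (cmod (hdot x u))^2" by (simp add: power_mult_distrib)
  then show ?thesis unfolding dE_expr by simp
qed
lemma dvis_nonneg: "0 \<le> dvis x u"
  unfolding dvis_def vnorm_eq by simp

lemma perp_lower:
  assumes x: "x \<noteq> 0" and w: "w \<noteq> 0" and u: "u \<noteq> 0" and hu: "herm u w = 0"
  shows "cmod (herm x w) / (norm x * norm w) \<le> dE x u"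
proof -
  define v where "v = Jv w"
  have nv: "norm v = norm w" using norm_J v_def by simp
  have uv: "hdot u v = 0" using hu herm_J v_def by simp
  have h: "herm x w = hdot x v" using herm_J v_def by simp
  have g: "complex_of_real ((norm w)^2 * ((norm x)^2*(norm u)^2 - (cmod (hdot x u))^2) - (norm u)^2 * (cmod (hdot x v))^2) = complex_of_real ((cmod (det3 x u v))^2)"
    using gram[of v x u] unfolding uv mc hdot_self nv by simp
  then have g': "(norm w)^2 * ((norm x)^2*(norm u)^2 - (cmod (hdot x u))^2) - (norm u)^2 * (cmod (hdot x v))^2 = (cmod (det3 x u v))^2"
    using of_real_eq_iff by blast
  define E where "E = (norm x)^2*(norm u)^2 - (cmod (hdot x u))^2"
  have ineq: "(norm u)^2 * (cmod (herm x w))^2 \<le> (norm w)^2 * E"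
    using g' h unfolding E_def by (smt (verit) zero_le_power2)
  have nx: "norm x > 0" "norm u > 0" "norm w > 0" using x u w by auto
  have "(cmod (herm x w) * norm u / norm w)^2 \<le> E"
    using ineq nx by (simp add: power_divide power_mult_distrib pos_divide_le_eq mult.commute)
  then have s: "cmod (herm x w) * norm u / norm w \<le> sqrt E" by (rule real_le_rsqrt)
  have "cmod (herm x w) / (norm x * norm w) = (cmod (herm x w) * norm u / norm w) / (norm x * norm u)"
    using nx by (simp add: field_simps)
  also have "\<dots> \<le> sqrt E / (norm x * norm u)"
    by (rule divide_right_mono) (use s nx in auto)
  also have "\<dots> = dE x u" unfolding dE_expr E_def ..
  finally show ?thesis .
qed

lemma perp_witness:
  assumes x: "x \<noteq> 0" "qf x = 0" and w: "qf w < 0"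
  shows "\<exists>u. u \<noteq> 0 \<and> herm u w = 0 \<and> dE x u \<le> cmod (herm x w) / (norm x * norm w)"
proof -
  have w0: "w \<noteq> 0" using w by auto
  define v where "v = Jv w"
  have nv: "norm v = norm w" using norm_J v_def by simp
  define h where "h = hdot x v"
  have h': "herm x w = h" using herm_J v_def h_def by simp
  define W where "W = (norm w)^2"
  have Wp: "W > 0" using w0 W_def by simp
  define k where "k = h / complex_of_real W"
  define u0 where "u0 = x - sm k v"
  have vv: "hdot v v = complex_of_real W" unfolding hdot_self nv W_def ..
  have hu0: "herm u0 w = 0" unfolding herm_J v_def[symmetric] u0_def lin vv k_def h_def[symmetric]
    using Wp by simp
  have u00: "u0 \<noteq> 0"
  proof
    assume "u0 = 0"
    then have xe: "x = sm k v" unfolding u0_def by simp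
    have "complex_of_real (qf x) = k * cnj k * complex_of_real (qf w)"
      unfolding herm_self[symmetric] xe lin v_def herm_JJ by (simp add: algebra_simps)
    then have "complex_of_real (qf x) = complex_of_real ((cmod k)^2 * qf w)"
      unfolding mc by simp
    then have "(cmod k)^2 * qf w = 0" using x(2) of_real_eq_iff by (metis)
    then have "k = 0" using w by simp
    then show False using xe x by simp
  qed
  define a where "a = (norm x)^2 - (cmod h)^2 / W"
  have p: "hdot x u0 = complex_of_real a"
    unfolding u0_def lin k_def h_def[symmetric] a_def hdot_self using Wp
    by (simp add: mc2 mc field_simps)
  have "hdot u0 u0 = hdot x u0 - k * cnj (hdot u0 v)"
    by (subst (1) u0_def) (simp add: lin hdot_swap[of v u0])
  also have "hdot u0 v = 0" using hu0 herm_J v_def by simp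
  finally have "hdot u0 u0 = complex_of_real a" using p by simp
  then have nu: "(norm u0)^2 = a" unfolding hdot_self using of_real_eq_iff by blast
  have nup: "norm u0 > 0" using u00 by simp
  have xa: "(norm x)^2 - a = (cmod h)^2 / W" unfolding a_def by simp
  have cp: "cmod (hdot x u0) = (norm u0)^2" unfolding p nu[symmetric] norm_of_real by simp
  have E: "(norm x)^2*(norm u0)^2 - (cmod (hdot x u0))^2 = (norm u0 * cmod h / norm w)^2"
    unfolding cp using xa nu W_def by (simp add: power_mult_distrib power_divide algebra_simps power2_eq_square)
  have "dE x u0 = (norm u0 * cmod h / norm w) / (norm x * norm u0)"
    unfolding dE_expr E using nup w0 by simp
  also have "\<dots> = cmod (herm x w) / (norm x * norm w)" unfolding h' using nup by simp
  finally show ?thesis using u00 hu0 by (intro exI[of _ u0]) simp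
qed

lemma part1:
  assumes x: "x \<in> S3" and w: "w \<in> LC"
  shows "setdist_with dE x (perp w) = cmod (herm x w) / (vnorm x * vnorm w)"
proof -
  have x0: "x \<noteq> 0" "qf x = 0" and wq: "qf w < 0" "w \<noteq> 0" using x w unfolding S3_def LC_def by auto
  obtain u where u: "u \<noteq> 0" "herm u w = 0" "dE x u \<le> cmod (herm x w) / (norm x * norm w)"
    using perp_witness[OF x0 wq(1)] by blast
  have up: "u \<in> perp w" using u unfolding perp_def by simp
  have "setdist_with dE x (perp w) \<le> dE x u" by (rule sd_lower[OF dE_nonneg up])
  moreover have "cmod (herm x w) / (norm x * norm w) \<le> setdist_with dE x (perp w)"
  proof (rule sd_greatest)
    show "perp w \<noteq> {}" using up by blast
    show "\<And>u'. u' \<in> perp w \<Longrightarrow> cmod (herm x w) / (norm x * norm w) \<le> dE x u'"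
      using perp_lower[OF x0(1) wq(2)] unfolding perp_def by blast
  qed
  ultimately show ?thesis using u(3) unfolding vnorm_eq by linarith
qed

lemma norm_null: assumes "qf x = 0" shows "(norm x)^2 = 2 * (cmod (c0 x))^2"
  using assms unfolding qf_expr norm_expr by simp

lemma dE_le_dvis:
  assumes x: "x \<in> S3" and u: "u \<in> S3"
  shows "dE x u \<le> sqrt 2 * dvis x u"
proof -
  have x0: "x \<noteq> 0" "qf x = 0" and u0: "u \<noteq> 0" "qf u = 0" using x u unfolding S3_def by auto
  define N where "N = norm x * norm u"
  have Np: "N > 0" using x0 u0 N_def by simp
  have "(2 * (cmod (c0 x) * cmod (c0 u)))^2 = N^2"
    unfolding N_def power_mult_distrib norm_null[OF x0(2)] norm_null[OF u0(2)] by simp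
  then have "2 * (cmod (c0 x) * cmod (c0 u)) = N" using Np
    by (subst (asm) power2_eq_iff_nonneg) auto
  then have P: "2 * cmod (c0 x * cnj (c0 u)) = N" by (simp add: norm_mult)
  define hh where "hh = cmod (herm x u)"
  define p where "p = cmod (hdot x u)"
  have hhN: "hh \<le> N" unfolding hh_def N_def by (rule cs_herm)
  have hh0: "0 \<le> hh" unfolding hh_def by simp
  have "cmod (2 * (c0 x * cnj (c0 u))) - cmod (herm x u) \<le> cmod (2 * (c0 x * cnj (c0 u)) - herm x u)"
    by (rule norm_triangle_ineq2)
  then have pN: "N - hh \<le> p" unfolding p_def null_id hh_def using P by (simp add: norm_mult)
  have "(N - hh)^2 \<le> p^2" using pN hhN by (simp add: power_mono)
  moreover have e: "(N - hh)^2 = N^2 - 2*hh*N + hh^2" by (simp add: power2_eq_square algebra_simps)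
  ultimately have key: "N^2 - p^2 \<le> 2 * hh * N" using zero_le_power2[of hh] by linarith
  have "dE x u = sqrt (N^2 - p^2) / N" unfolding dE_expr N_def p_def by (simp add: power_mult_distrib)
  also have "\<dots> = sqrt ((N^2 - p^2) / N^2)" using Np by (simp add: real_sqrt_divide)
  also have "\<dots> \<le> sqrt (2 * (hh / N))"
  proof (intro real_sqrt_le_mono)
    have "(N^2 - p^2)/N^2 \<le> 2*hh*N/N^2" using key Np by (intro divide_right_mono) auto
    also have "2*hh*N/N^2 = 2*(hh/N)" using Np by (simp add: power2_eq_square)
    finally show "(N^2 - p^2)/N^2 \<le> 2*(hh/N)" .
  qed
  also have "\<dots> = sqrt 2 * dvis x u" unfolding dvis_def vnorm_eq hh_def N_def by (simp only: real_sqrt_mult)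
  finally show ?thesis .
qed

lemma sm_real: "sm (complex_of_real s) v = s *\<^sub>R v"
proof -
  obtain a b c where v: "v = (a,b,c)" by (rule cvec_cases)
  show ?thesis unfolding v sm_def by (simp add: scaleR_conv_of_real)
qed

lemma chain_witness:
  assumes x: "x \<in> S3" and w: "qf w < 0"
  shows "\<exists>u. u \<in> chain w \<and> cmod (herm x u) = (cmod (herm x w))^2 / (- qf w)
     \<and> norm x - cmod (herm x w) * norm w / (- qf w) \<le> norm u"
proof -
  have x0: "x \<noteq> 0" "qf x = 0" using x unfolding S3_def by auto
  define Q where "Q = - qf w"
  have Qp: "Q > 0" using w Q_def by simp
  define h where "h = herm x w"
  define k where "k = h / complex_of_real Q"
  define u1 where "u1 = x + sm k w"
  define v where "v = crs w x"
  have ww: "herm w w = - complex_of_real Q" unfolding herm_self Q_def by simp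
  have xx: "herm x x = 0" unfolding herm_self x0 by simp
  have vw1: "herm v w = 0" unfolding v_def by (rule crs_perp1)
  have vw2: "herm w v = 0" using herm_swap[of v w] vw1 by simp
  have vx1: "herm v x = 0" unfolding v_def by (rule crs_perp2)
  have vx2: "herm x v = 0" using herm_swap[of v x] vx1 by simp
  note vw = vw1 vw2 and vx = vx1 vx2
  have u1w: "herm u1 w = 0" unfolding u1_def lin ww k_def h_def[symmetric] using Qp by simp
  have xu1: "herm x u1 = complex_of_real ((cmod h)^2 / Q)"
    unfolding u1_def lin xx k_def h_def[symmetric] using Qp by (simp add: mc2 mc field_simps)
  have u1v: "herm u1 v = 0" unfolding u1_def lin vw vx by simp
  have vu1: "herm v u1 = 0" using u1v herm_swap[of u1 v] by simp
  have u1u1: "herm u1 u1 = complex_of_real ((cmod h)^2 / Q)"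
  proof -
    have "herm u1 u1 = herm x u1 + k * herm w u1" by (subst (1) u1_def) (simp add: lin)
    also have "herm w u1 = 0" using u1w herm_swap[of u1 w] by simp
    finally show ?thesis using xu1 by simp
  qed
  have vv: "herm v v = - complex_of_real ((cmod h)^2)"
    unfolding v_def crsq ww xx using herm_swap[of x w] h_def by (simp add: mc2 mc)
  define sg where "sg = (if 0 \<le> inner u1 v then 1 else -1::real)"
  define s where "s = sg / sqrt Q"
  have s2: "s^2 = 1 / Q" unfolding s_def sg_def using Qp by (simp add: power_divide)
  have sqQ: "sqrt Q > 0" using Qp by simp
  have sin: "0 \<le> s * inner u1 v"
  proof (cases "0 \<le> inner u1 v")
    case True
    then have "s = 1 / sqrt Q" unfolding s_def sg_def by simp
    then show ?thesis using True sqQ by simp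
  next
    case False
    then have "s = - 1 / sqrt Q" unfolding s_def sg_def by simp
    then show ?thesis using False sqQ by (simp add: divide_nonpos_pos)
  qed
  define u where "u = u1 + s *\<^sub>R v"
  have ue: "u = u1 + sm (complex_of_real s) v" unfolding u_def sm_real ..
  have uw: "herm u w = 0" unfolding ue lin u1w vw by simp
  have uu: "herm u u = 0"
  proof -
    have "herm u u = herm u1 u1 + complex_of_real s * complex_of_real s * herm v v"
      unfolding ue lin u1v vu1 by (simp add: algebra_simps)
    also have "\<dots> = complex_of_real ((cmod h)^2 / Q - s^2 * (cmod h)^2)"
      unfolding u1u1 vv by (simp add: power2_eq_square)
    also have "\<dots> = 0" unfolding s2 by simp
    finally show ?thesis .
  qed
  have xu: "herm x u = complex_of_real ((cmod h)^2 / Q)" unfolding ue lin xu1 vx by simp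
  have "(norm u)^2 = (norm u1)^2 + 2 * (s * inner u1 v) + s^2 * (norm v)^2"
    unfolding u_def power2_norm_eq_inner inner_add_left inner_add_right inner_scaleR_left inner_scaleR_right inner_commute[of v u1]
    by (simp add: algebra_simps power2_eq_square)
  moreover have "0 \<le> s^2 * (norm v)^2" by simp
  ultimately have "(norm u1)^2 \<le> (norm u)^2" using sin by linarith
  then have uu1: "norm u1 \<le> norm u" by (rule power2_le_imp_le) simp
  have "norm x - norm (sm k w) \<le> norm u1" unfolding u1_def by (rule norm_diff_ineq)
  then have lb: "norm x - cmod h * norm w / Q \<le> norm u1" unfolding norm_sm k_def using Qp
    by (simp add: norm_divide)
  have u10: "u1 \<noteq> 0"
  proof (cases "h = 0")
    case True then show ?thesis unfolding u1_def k_def using x0 by simp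
  next
    case False
    then have "herm u1 u1 \<noteq> 0" unfolding u1u1 using Qp by simp
    then show ?thesis by auto
  qed
  have un: "u \<noteq> 0" using uu1 u10 by auto
  have "qf u = 0" using uu unfolding herm_self by simp
  then have "u \<in> chain w" unfolding chain_def perp_def S3_def using un uw by simp
  moreover have "cmod (herm x u) = (cmod h)^2 / Q" unfolding xu norm_of_real using Qp by simp
  moreover have "norm x - cmod h * norm w / Q \<le> norm u" using lb uu1 by linarith
  ultimately show ?thesis unfolding h_def Q_def by blast
qed

lemma chain_est:
  assumes x: "x \<in> S3" and w: "qf w < 0" and k: "0 < \<kappa>" "\<kappa> \<le> 1" "\<kappa> * (norm w)^2 \<le> - qf w"
  shows "\<exists>u\<in>chain w. dvis x u \<le> (2/\<kappa>) * (cmod (herm x w) / (norm x * norm w))"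
proof -
  obtain u where u: "u \<in> chain w" "cmod (herm x u) = (cmod (herm x w))^2 / (- qf w)"
    "norm x - cmod (herm x w) * norm w / (- qf w) \<le> norm u"
    using chain_witness[OF x w] by blast
  have un: "u \<noteq> 0" using u(1) unfolding chain_def perp_def by simp
  have x0: "x \<noteq> 0" using x unfolding S3_def by simp
  have w0: "w \<noteq> 0" using w by auto
  define A where "A = cmod (herm x w)"
  define X where "X = norm x"
  define Wn where "Wn = norm w"
  define U where "U = norm u"
  define Q where "Q = - qf w"
  define r where "r = A / (X * Wn)"
  have pos: "X > 0" "Wn > 0" "U > 0" "Q > 0" "A \<ge> 0" using x0 w0 un w unfolding X_def Wn_def U_def Q_def A_def by auto
  have r0: "r \<ge> 0" unfolding r_def using pos by simp
  have kQ: "\<kappa> * Wn^2 \<le> Q" using k(3) unfolding Wn_def Q_def .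
  have dv: "dvis x u = sqrt (cmod (herm x u) / (X * U))" unfolding dvis_def vnorm_eq X_def U_def ..
  have hu: "cmod (herm x u) = A^2 / Q" using u(2) unfolding A_def Q_def .
  have Ub: "X - A * Wn / Q \<le> U" using u(3) unfolding A_def Q_def X_def Wn_def U_def .
  have "dvis x u \<le> (2/\<kappa>) * r"
  proof (cases "\<kappa>/2 \<le> r")
    case True
    have "cmod (herm x u) / (X * U) \<le> 1" using cs_herm[of x u] pos unfolding X_def U_def by simp
    then have "dvis x u \<le> 1" unfolding dv by simp
    also have "1 \<le> (2/\<kappa>) * r"
    proof -
      have "(2/\<kappa>) * (\<kappa>/2) \<le> (2/\<kappa>) * r" using True k by (intro mult_left_mono) auto
      then show ?thesis using k by simp
    qed
    finally show ?thesis .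
  next
    case False
    then have rk: "r < \<kappa>/2" by simp
    have A_eq: "A = r * X * Wn" unfolding r_def using pos by simp
    have "A * Wn / Q \<le> A * Wn / (\<kappa> * Wn^2)"
      using kQ pos k by (intro divide_left_mono) (auto intro!: mult_pos_pos)
    also have "\<dots> = r * X / \<kappa>" unfolding A_eq using pos k by (simp add: power2_eq_square)
    also have "\<dots> < X / 2" using rk pos k by (simp add: field_simps)
    finally have "A * Wn / Q < X / 2" .
    then have UX: "X / 2 < U" using Ub by linarith
    have "cmod (herm x u) / (X * U) = A^2 / (Q * (X * U))" unfolding hu by simp
    also have "\<dots> \<le> A^2 / ((\<kappa> * Wn^2) * (X * (X / 2)))"
    proof (intro divide_left_mono)
      show "\<kappa> * Wn\<^sup>2 * (X * (X / 2)) \<le> Q * (X * U)"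
        using kQ UX pos k by (intro mult_mono) (auto intro!: mult_left_mono)
      show "0 \<le> A^2" by simp
      show "0 < Q * (X * U) * (\<kappa> * Wn\<^sup>2 * (X * (X / 2)))" using pos k by simp
    qed
    also have "\<dots> = (2/\<kappa>) * r^2" unfolding r_def using pos k by (simp add: field_simps power2_eq_square)
    finally have rat: "cmod (herm x u) / (X * U) \<le> (2/\<kappa>) * r^2" .
    have "dvis x u \<le> sqrt ((2/\<kappa>) * r^2)" unfolding dv by (rule real_sqrt_le_mono[OF rat])
    also have "\<dots> = sqrt (2/\<kappa>) * r" unfolding real_sqrt_mult using r0 by simp
    also have "\<dots> \<le> (2/\<kappa>) * r"
    proof (intro mult_right_mono r0)
      have g1: "1 \<le> 2/\<kappa>" using k by (simp add: field_simps)
      have "2/\<kappa> * 1 \<le> 2/\<kappa> * (2/\<kappa>)" by (rule mult_left_mono[OF g1]) (use k in simp)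
      then have "sqrt (2/\<kappa>) \<le> sqrt ((2/\<kappa>)^2)" by (intro real_sqrt_le_mono) (simp add: power2_eq_square)
      then show "sqrt (2/\<kappa>) \<le> 2/\<kappa>" using k by simp
    qed
    finally show ?thesis .
  qed
  then show ?thesis using u(1) unfolding r_def A_def X_def Wn_def by blast
qed

lemma c0_diff_sm: "c0 (a - sm k l) = c0 a - k * c0 l"
  unfolding sm_def c0_def by simp

lemma mm_bound:
  assumes a: "a \<noteq> 0" and l: "l \<noteq> 0"
  shows "cmod (c0 a) / norm a \<le> cmod (c0 l) / norm l + dE a l"
proof -
  define p where "p = hdot a l"
  define L where "L = (norm l)^2"
  have Lp: "L > 0" using l L_def by simp
  have nl: "norm l > 0" "norm a > 0" using a l by auto
  define k where "k = p / complex_of_real L"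
  define y where "y = a - sm k l"
  have ll: "hdot l l = complex_of_real L" unfolding hdot_self L_def ..
  have yl: "hdot y l = 0" unfolding y_def lin ll k_def p_def[symmetric] using Lp by simp
  have "hdot y y = hdot a y - k * cnj (hdot y l)"
    by (subst (1) y_def) (simp add: lin hdot_swap[of l y])
  also have "\<dots> = hdot a y" unfolding yl by simp
  also have "\<dots> = complex_of_real ((norm a)^2 - (cmod p)^2 / L)"
    unfolding y_def lin hdot_self k_def p_def[symmetric] using Lp by (simp add: mc2 mc field_simps)
  finally have ny: "(norm y)^2 = (norm a)^2 - (cmod p)^2 / L" unfolding hdot_self using of_real_eq_iff by blast
  define D where "D = (norm a)^2 * (norm l)^2 - (cmod p)^2"
  have D0: "0 \<le> D" unfolding D_def p_def using cs[of a l] by (simp add: power_mono flip: power_mult_distrib)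
  have dE: "dE a l = sqrt D / (norm a * norm l)" unfolding dE_expr D_def p_def ..
  have "(norm y)^2 = (sqrt D / norm l)^2" unfolding ny using D0 nl unfolding D_def L_def
    by (simp add: power_divide field_simps)
  then have nyD: "norm y = sqrt D / norm l" using D0 nl by (subst (asm) power2_eq_iff_nonneg) auto
  have "cmod (c0 a) = cmod (k * c0 l + c0 y)" unfolding y_def c0_diff_sm by simp
  also have "\<dots> \<le> cmod k * cmod (c0 l) + cmod (c0 y)" by (metis norm_triangle_ineq norm_mult)
  also have "\<dots> \<le> (norm a / norm l) * cmod (c0 l) + norm y"
  proof (intro add_mono mult_right_mono c0_le_norm)
    have "cmod k = cmod p / L" unfolding k_def using Lp by (simp add: norm_divide)
    also have "\<dots> \<le> norm a * norm l / L" using cs[of a l] Lp unfolding p_def by (simp add: divide_right_mono)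
    also have "\<dots> = norm a / norm l" unfolding L_def using nl by (simp add: power2_eq_square)
    finally show "cmod k \<le> norm a / norm l" .
  qed simp
  also have "\<dots> = norm a * (cmod (c0 l) / norm l + dE a l)"
    unfolding nyD dE using nl by (simp add: field_simps)
  finally show ?thesis using nl by (simp add: field_simps)
qed

lemma K_bound:
  assumes KL: "K \<subseteq> LC" and Kc: "dE_compact K"
  shows "\<exists>\<kappa>>0. \<kappa> \<le> 1 \<and> (\<forall>w\<in>K. \<kappa> * (norm w)^2 \<le> - qf w)"
proof -
  define m where "m w = cmod (c0 w) / norm w" for w
  define sq where "sq = sqrt (1/2::real)"
  have sqp: "sq > 0" unfolding sq_def by simp
  have sq2: "sq^2 = 1/2" unfolding sq_def by simp
  have qfm: "- qf w = (norm w)^2 * (1 - 2 * (m w)^2)" if "w \<noteq> 0" for w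
  proof -
    have e1: "(norm w)^2 * (1 - 2 * (m w)^2) = (norm w)^2 - 2 * (cmod (c0 w))^2"
      unfolding m_def power_divide using that by (simp add: field_simps)
    show ?thesis unfolding e1 qf_expr using norm_expr[of w] by linarith
  qed
  have mLC: "m w < sq \<and> 0 \<le> m w" if "w \<in> LC" for w
  proof -
    have w0: "w \<noteq> 0" "qf w < 0" using that unfolding LC_def by auto
    have "0 < (norm w)^2 * (1 - 2 * (m w)^2)" using qfm[OF w0(1)] w0(2) by simp
    then have "(m w)^2 < 1/2" using w0(1) by (simp add: zero_less_mult_iff)
    then have "m w < sq" unfolding sq_def by (rule real_less_rsqrt)
    then show ?thesis unfolding m_def by simp
  qed
  have K0: "w \<noteq> 0" if "w \<in> K" for w using that KL unfolding LC_def by auto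
  have "\<exists>\<epsilon>>0. \<forall>w\<in>K. m w + \<epsilon> \<le> sq"
  proof (rule ccontr)
    assume H: "\<not> (\<exists>\<epsilon>>0. \<forall>w\<in>K. m w + \<epsilon> \<le> sq)"
    have "\<forall>n. \<exists>w. w \<in> K \<and> sq < m w + inverse (real (Suc n))"
    proof
      fix n
      have "inverse (real (Suc n)) > 0" by simp
      then have "\<not> (\<forall>w\<in>K. m w + inverse (real (Suc n)) \<le> sq)" using H by blast
      then show "\<exists>w. w \<in> K \<and> sq < m w + inverse (real (Suc n))" by (auto simp: not_le)
    qed
    then obtain sseq where ss: "\<And>n. sseq n \<in> K" "\<And>n. sq < m (sseq n) + inverse (real (Suc n))"
      by metis
    obtain r l where r: "strict_mono r" "l \<in> K" "(\<lambda>n. dE (sseq (r n)) l) \<longlonglongrightarrow> 0"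
      using Kc ss(1) unfolding dE_compact_def by blast
    have ml: "m l < sq" using mLC r(2) KL by blast
    define e where "e = (sq - m l) / 2"
    have ep: "e > 0" unfolding e_def using ml by simp
    have "eventually (\<lambda>n. dE (sseq (r n)) l < e) sequentially"
      using order_tendstoD(2)[OF r(3) ep] .
    then obtain M where M: "\<And>n. n \<ge> M \<Longrightarrow> dE (sseq (r n)) l < e"
      unfolding eventually_sequentially by blast
    obtain N where N: "inverse (real (Suc N)) < e" using reals_Archimedean[OF ep] by blast
    define n where "n = max M N"
    have d: "dE (sseq (r n)) l < e" using M n_def by simp
    have "N \<le> r n" using seq_suble[OF r(1), of n] n_def by simp
    then have "inverse (real (Suc (r n))) \<le> inverse (real (Suc N))"
      by (intro le_imp_inverse_le) auto
    then have i: "inverse (real (Suc (r n))) < e" using N by linarith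
    have "m (sseq (r n)) \<le> m l + dE (sseq (r n)) l"
      unfolding m_def by (rule mm_bound[OF K0[OF ss(1)] K0[OF r(2)]])
    then have "m (sseq (r n)) + inverse (real (Suc (r n))) < m l + e + e" using d i by linarith
    also have "m l + e + e = sq" unfolding e_def by simp
    finally have "m (sseq (r n)) + inverse (real (Suc (r n))) < sq" .
    then show False using ss(2)[of "r n"] by linarith
  qed
  then obtain \<epsilon> where ep: "\<epsilon> > 0" "\<And>w. w \<in> K \<Longrightarrow> m w + \<epsilon> \<le> sq" by blast
  define \<kappa> where "\<kappa> = min 1 (\<epsilon> * sq)"
  have kp: "\<kappa> > 0" unfolding \<kappa>_def using ep sqp by simp
  have "\<kappa> * (norm w)^2 \<le> - qf w" if w: "w \<in> K" for w
  proof -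
    have m0: "0 \<le> m w" using mLC w KL by blast
    have "\<epsilon> * sq \<le> (sq - m w) * (sq + m w)"
      using ep(2)[OF w] m0 ep(1) sqp by (intro mult_mono) auto
    also have "\<dots> = 1/2 - (m w)^2" using sq2 by (simp add: algebra_simps power2_eq_square)
    finally have h1: "\<epsilon> * sq \<le> 1/2 - (m w)^2" .
    have h2: "0 < \<epsilon> * sq" using ep(1) sqp by simp
    have h3: "\<kappa> \<le> \<epsilon> * sq" unfolding \<kappa>_def by simp
    have "\<kappa> \<le> 1 - 2 * (m w)^2" using h1 h2 h3 by linarith
    then have "\<kappa> * (norm w)^2 \<le> (1 - 2 * (m w)^2) * (norm w)^2" by (intro mult_right_mono) auto
    then show ?thesis using qfm[OF K0[OF w]] by (simp add: mult.commute)
  qed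
  moreover have "\<kappa> \<le> 1" unfolding \<kappa>_def by simp
  ultimately show ?thesis using kp by blast
qed

theorem lemma5p9:
  fixes K :: "cvec set"
  assumes "K \<subseteq> LC" and "dE_compact K"
  shows "(\<forall>x\<in>S3. \<forall>w\<in>K.
            setdist_with dE x (perp w) = cmod (herm x w) / (vnorm x * vnorm w))
       \<and> (\<exists>C::real. C \<ge> 1 \<and> (\<forall>x\<in>S3. \<forall>w\<in>K.
            inverse C * setdist_with dE x (perp w) \<le> setdist_with dE x (chain w)
          \<and> setdist_with dE x (chain w) \<le> C * setdist_with dE x (perp w)
          \<and> inverse C * setdist_with dE x (chain w) \<le> setdist_with dvis x (chain w)
          \<and> setdist_with dvis x (chain w) \<le> C * setdist_with dE x (chain w)))"
proof -
  obtain \<kappa> where k: "\<kappa> > 0" "\<kappa> \<le> 1" "\<And>w. w \<in> K \<Longrightarrow> \<kappa> * (norm w)^2 \<le> - qf w"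
    using K_bound[OF assms] by blast
  define t where "t = 2 / \<kappa>"
  have t2: "t \<ge> 2" unfolding t_def using k by (simp add: field_simps)
  define C where "C = 2 * t"
  have C4: "C \<ge> 4" unfolding C_def using t2 by simp
  have "sqrt 2 \<le> sqrt (4::real)" by (rule real_sqrt_le_mono) simp
  then have s2: "sqrt 2 \<le> (2::real)" by simp
  have P1: "\<forall>x\<in>S3. \<forall>w\<in>K. setdist_with dE x (perp w) = cmod (herm x w) / (vnorm x * vnorm w)"
    using part1 assms(1) by blast
  have "\<forall>x\<in>S3. \<forall>w\<in>K.
            inverse C * setdist_with dE x (perp w) \<le> setdist_with dE x (chain w)
          \<and> setdist_with dE x (chain w) \<le> C * setdist_with dE x (perp w)
          \<and> inverse C * setdist_with dE x (chain w) \<le> setdist_with dvis x (chain w)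
          \<and> setdist_with dvis x (chain w) \<le> C * setdist_with dE x (chain w)"
  proof (intro ballI)
    fix x w assume x: "x \<in> S3" and w: "w \<in> K"
    have wL: "w \<in> LC" using w assms(1) by blast
    have wq: "qf w < 0" "w \<noteq> 0" using wL unfolding LC_def by auto
    have x0: "x \<noteq> 0" using x unfolding S3_def by simp
    define r where "r = cmod (herm x w) / (vnorm x * vnorm w)"
    define Ec where "Ec = setdist_with dE x (chain w)"
    define Vc where "Vc = setdist_with dvis x (chain w)"
    have P: "setdist_with dE x (perp w) = r" unfolding r_def using P1 x w by blast
    obtain u0 where u0: "u0 \<in> chain w" "dvis x u0 \<le> t * r"
      using chain_est[OF x wq(1) k(1) k(2) k(3)[OF w]] unfolding t_def r_def vnorm_eq by blast
    have ne: "chain w \<noteq> {}" using u0 by blast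
    have r0: "0 \<le> r" unfolding r_def vnorm_eq by simp
    have F1: "r \<le> Ec" unfolding Ec_def
    proof (rule sd_greatest[OF ne])
      fix u assume "u \<in> chain w"
      then have "u \<noteq> 0" "herm u w = 0" unfolding chain_def perp_def by auto
      then show "r \<le> dE x u" unfolding r_def vnorm_eq by (rule perp_lower[OF x0 wq(2)])
    qed
    have "Ec / sqrt 2 \<le> Vc" unfolding Vc_def
    proof (rule sd_greatest[OF ne])
      fix u assume u: "u \<in> chain w"
      have "Ec \<le> dE x u" unfolding Ec_def by (rule sd_lower[where d=dE and x=x, OF dE_nonneg u])
      also have "\<dots> \<le> sqrt 2 * dvis x u" using u unfolding chain_def by (intro dE_le_dvis x) simp
      finally show "Ec / sqrt 2 \<le> dvis x u" by (simp add: pos_divide_le_eq mult.commute)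
    qed
    then have F2: "Ec \<le> sqrt 2 * Vc" by (simp add: pos_divide_le_eq mult.commute)
    have F3: "Vc \<le> t * r" unfolding Vc_def using sd_lower[where d=dvis and x=x, OF dvis_nonneg u0(1)] u0(2) by linarith
    have Vc0: "0 \<le> Vc" unfolding Vc_def by (rule sd_greatest[OF ne]) (rule dvis_nonneg)
    have "sqrt 2 * Vc \<le> 2 * Vc" by (rule mult_right_mono[OF s2 Vc0])
    then have Ec2: "Ec \<le> 2 * Vc" using F2 by linarith
    have Cp: "C > 0" using C4 by simp
    have i1: "inverse C * r \<le> Ec"
    proof -
      have "inverse C \<le> 1" using C4 by (simp add: inverse_le_1_iff)
      then have "inverse C * r \<le> 1 * r" by (intro mult_right_mono r0)
      then show ?thesis using F1 by simp
    qed
    have i2: "Ec \<le> C * r"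
    proof -
      have "2 * Vc \<le> 2 * (t * r)" using F3 by simp
      then show ?thesis using Ec2 unfolding C_def by (simp add: mult.assoc)
    qed
    have i3: "inverse C * Ec \<le> Vc"
    proof -
      have "2 * Vc \<le> C * Vc" using C4 Vc0 by (intro mult_right_mono) auto
      then have "Ec \<le> C * Vc" using Ec2 by linarith
      then have "Ec / C \<le> Vc" using Cp by (simp add: pos_divide_le_eq mult.commute)
      then show ?thesis by (simp add: divide_inverse mult.commute)
    qed
    have i4: "Vc \<le> C * Ec"
    proof -
      have "t * r \<le> t * Ec" using F1 t2 by (intro mult_left_mono) auto
      moreover have "t * Ec \<le> C * Ec" using F1 r0 t2 unfolding C_def by (intro mult_right_mono) auto
      ultimately show ?thesis using F3 by linarith
    qed
    show "inverse C * setdist_with dE x (perp w) \<le> setdist_with dE x (chain w)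
          \<and> setdist_with dE x (chain w) \<le> C * setdist_with dE x (perp w)
          \<and> inverse C * setdist_with dE x (chain w) \<le> setdist_with dvis x (chain w)
          \<and> setdist_with dvis x (chain w) \<le> C * setdist_with dE x (chain w)"
      unfolding P Ec_def[symmetric] Vc_def[symmetric] using i1 i2 i3 i4 by blast
  qed
  moreover have "C \<ge> 1" using C4 by simp
  ultimately show ?thesis using P1 by blast
qed

end
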